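(* Let $A\in\mathbb{Z}^{d_a\times n}$, $B\in\mathbb{Z}^{d_b\times n}$ and $C\in\mathbb{Z}^{s\times n}$ be fixed. For $N\ge1$ let $([A,B],C)^{(N)}$ be the matrix with $Nn+Ns$ columns $$\begin{pmatrix} B & B & \cdots & B & & & & \\ A & & & & & & & \\ & A & & & & & & \\ & & \ddots & & & & & \\ & & & A & & & & \\ C & & & & I_s & & & \\ & C & & & & I_s & & \\ & & \ddots & & & & \ddots & \\ & & & C & & & & I_s\end{pmatrix}$$ (blank entries are zero). Then the encoding length of the Graver basis of $([A,B],C)^{(N)}$ increases only polynomially in $N$.
   Context: For an integer matrix $M$ with $k$ columns and each closed orthant $\mathbb{O}_j$ of $\mathbb{R}^k$, let $H_j$ be the unique minimal set of integer vectors generating $\{z\in\mathbb{O}_j: Mz=0\}\cap\mathbb{Z}^k$ over $\mathbb{Z}_+$. The Graver basis of $M$ is $\bigcup_j H_j\setminus\{0\}$. *)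

theory Defs
  imports Main
begin

text \<open>Integer vectors of \<open>\<int>^k\<close> are functions \<open>nat \<Rightarrow> int\<close> vanishing outside \<open>{..<k}\<close>;
  an integer matrix with m rows and k columns is a function \<open>nat \<Rightarrow> nat \<Rightarrow> int\<close>
  (row, column), only entries with row < m and column < k being relevant.
  A closed orthant of \<open>\<real>^k\<close> is given by a sign pattern \<open>\<sigma>\<close>
  (\<open>\<sigma> i\<close> true: coordinate i nonnegative, false: nonpositive).\<close>

definition kernel_orthant ::
  "nat \<Rightarrow> nat \<Rightarrow> (nat \<Rightarrow> nat \<Rightarrow> int) \<Rightarrow> (nat \<Rightarrow> bool) \<Rightarrow> (nat \<Rightarrow> int) set" where
  "kernel_orthant m k M \<sigma> =
     {z. (\<forall>i. k \<le> i \<longrightarrow> z i = 0) \<and>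
         (\<forall>i<k. if \<sigma> i then 0 \<le> z i else z i \<le> 0) \<and>
         (\<forall>r<m. (\<Sum>j<k. M r j * z j) = 0)}"

definition nat_generates :: "(nat \<Rightarrow> int) set \<Rightarrow> (nat \<Rightarrow> int) set \<Rightarrow> bool" where
  "nat_generates G S \<longleftrightarrow> G \<subseteq> S \<and>
     (\<forall>z\<in>S. \<exists>F c. finite F \<and> F \<subseteq> G \<and> z = (\<lambda>i. \<Sum>g\<in>F. int (c g) * g i))"

definition hilbert_basis :: "(nat \<Rightarrow> int) set \<Rightarrow> (nat \<Rightarrow> int) set" where
  "hilbert_basis S = (THE G. nat_generates G S \<and> (\<forall>G'. G' \<subset> G \<longrightarrow> \<not> nat_generates G' S))"

definition graver_basis ::
  "nat \<Rightarrow> nat \<Rightarrow> (nat \<Rightarrow> nat \<Rightarrow> int) \<Rightarrow> (nat \<Rightarrow> int) set" where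
  "graver_basis m k M = (\<Union>\<sigma>. hilbert_basis (kernel_orthant m k M \<sigma>)) - {(\<lambda>_. 0)}"

text \<open>Binary encoding length: bit length of |x| plus one sign bit.\<close>
fun bitlen :: "nat \<Rightarrow> nat" where
  "bitlen n = (if n = 0 then 0 else Suc (bitlen (n div 2)))"

definition enc_int :: "int \<Rightarrow> nat" where
  "enc_int x = 1 + bitlen (nat \<bar>x\<bar>)"

definition enc_vec :: "nat \<Rightarrow> (nat \<Rightarrow> int) \<Rightarrow> nat" where
  "enc_vec k z = (\<Sum>i<k. enc_int (z i))"

definition enc_set :: "nat \<Rightarrow> (nat \<Rightarrow> int) set \<Rightarrow> nat" where
  "enc_set k G = (\<Sum>z\<in>G. enc_vec k z)"

text \<open>The matrix \<open>([A,B],C)^(N)\<close>: A is da x n, B is db x n, C is s x n.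
  Rows: db rows of \<open>[B ... B 0]\<close>, then N blocks of da rows (A in block i),
  then N blocks of s rows (C in block i, identity \<open>I_s\<close> in the i-th slack block).\<close>
definition block_matrix ::
  "nat \<Rightarrow> nat \<Rightarrow> nat \<Rightarrow> nat \<Rightarrow> (nat \<Rightarrow> nat \<Rightarrow> int) \<Rightarrow> (nat \<Rightarrow> nat \<Rightarrow> int) \<Rightarrow>
   (nat \<Rightarrow> nat \<Rightarrow> int) \<Rightarrow> nat \<Rightarrow> nat \<Rightarrow> nat \<Rightarrow> int" where
  "block_matrix da db s n A B C N r c =
     (if r < db then (if c < N * n then B r (c mod n) else 0)
      else if r - db < N * da then
        (let i = (r - db) div da; a = (r - db) mod da in
          if c < N * n \<and> c div n = i then A a (c mod n) else 0)
      else
        (let r' = r - db - N * da; i = r' div s; t = r' mod s in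
          if c < N * n then (if c div n = i then C t (c mod n) else 0)
          else if c - N * n = i * s + t then 1 else 0))"

definition block_rows :: "nat \<Rightarrow> nat \<Rightarrow> nat \<Rightarrow> nat \<Rightarrow> nat" where
  "block_rows da db s N = db + N * da + N * s"

definition block_cols :: "nat \<Rightarrow> nat \<Rightarrow> nat \<Rightarrow> nat" where
  "block_cols n s N = N * n + N * s"

end

theory Submission
  imports Defs Complex_Main
begin



lemma mono_subseq_nat:
  fixes h :: "nat \<Rightarrow> nat"
  obtains \<psi> :: "nat \<Rightarrow> nat" where "strict_mono \<psi>" "\<forall>m m'. m \<le> m' \<longrightarrow> h (\<psi> m) \<le> h (\<psi> m')"
proof -
  obtain f where f: "strict_mono f" "monoseq (\<lambda>n. h (f n))" using seq_monosub by blast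
  show thesis
  proof (cases "\<forall>m n. m \<le> n \<longrightarrow> h (f m) \<le> h (f n)")
    case True then show ?thesis using that f(1) by blast
  next
    case False
    then have dec: "\<forall>m n. m \<le> n \<longrightarrow> h (f n) \<le> h (f m)" using f(2) unfolding monoseq_def by blast
    obtain n0 where n0: "\<forall>n. h (f n0) \<le> h (f n)"
      using ex_has_least_nat[of "\<lambda>_. True" 0 "\<lambda>n. h (f n)"] by blast
    define \<psi> where "\<psi> = (\<lambda>m. f (m + n0))"
    have "strict_mono \<psi>" using f(1) by (simp add: \<psi>_def strict_mono_def)
    moreover have "\<forall>m m'. m \<le> m' \<longrightarrow> h (\<psi> m) \<le> h (\<psi> m')"
    proof (intro allI impI)
      fix m m' :: nat assume "m \<le> m'"
      have "h (\<psi> m) \<le> h (f n0)" using dec by (simp add: \<psi>_def)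
      also have "\<dots> \<le> h (\<psi> m')" using n0 by (simp add: \<psi>_def)
      finally show "h (\<psi> m) \<le> h (\<psi> m')" .
    qed
    ultimately show ?thesis using that by blast
  qed
qed

lemma dickson_subseq:
  fixes f :: "nat \<Rightarrow> nat \<Rightarrow> nat"
  shows "\<exists>\<phi>::nat\<Rightarrow>nat. strict_mono \<phi> \<and> (\<forall>l<k. \<forall>m m'. m \<le> m' \<longrightarrow> f (\<phi> m) l \<le> f (\<phi> m') l)"
proof (induction k)
  case 0
  have "strict_mono (id :: nat \<Rightarrow> nat)" by (simp add: strict_mono_def)
  then show ?case by blast
next
  case (Suc k)
  then obtain \<phi> :: "nat \<Rightarrow> nat" where \<phi>: "strict_mono \<phi>" "\<forall>l<k. \<forall>m m'. m \<le> m' \<longrightarrow> f (\<phi> m) l \<le> f (\<phi> m') l"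
    by blast
  obtain \<psi> :: "nat \<Rightarrow> nat" where \<psi>: "strict_mono \<psi>" "\<forall>m m'. m \<le> m' \<longrightarrow> f (\<phi> (\<psi> m)) k \<le> f (\<phi> (\<psi> m')) k"
    using mono_subseq_nat[of "\<lambda>m. f (\<phi> m) k"] by blast
  have "strict_mono (\<phi> \<circ> \<psi>)" using \<phi>(1) \<psi>(1) by (simp add: strict_mono_def)
  moreover have "\<forall>l<Suc k. \<forall>m m'. m \<le> m' \<longrightarrow> f ((\<phi> \<circ> \<psi>) m) l \<le> f ((\<phi> \<circ> \<psi>) m') l"
  proof (intro allI impI)
    fix l m m' :: nat assume l: "l < Suc k" and mm: "m \<le> m'"
    show "f ((\<phi> \<circ> \<psi>) m) l \<le> f ((\<phi> \<circ> \<psi>) m') l"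
    proof (cases "l = k")
      case True then show ?thesis using \<psi>(2) mm by simp
    next
      case False
      then have "l < k" using l by simp
      moreover have "\<psi> m \<le> \<psi> m'" using \<psi>(1) mm by (simp add: strict_mono_less_eq)
      ultimately show ?thesis using \<phi>(2) by simp
    qed
  qed
  ultimately show ?case by blast
qed

lemma antichain_finite:
  fixes V :: "(nat \<Rightarrow> nat) set"
  assumes supp: "\<forall>v\<in>V. \<forall>l\<ge>k. v l = 0"
    and anti: "\<forall>v\<in>V. \<forall>w\<in>V. (\<forall>l<k. v l \<le> w l) \<longrightarrow> v = w"
  shows "finite V"
proof (rule ccontr)
  assume "infinite V"
  then obtain f :: "nat \<Rightarrow> nat \<Rightarrow> nat" where f: "inj f" "range f \<subseteq> V"
    using infinite_countable_subset by blast
  obtain \<phi> :: "nat \<Rightarrow> nat" where \<phi>: "strict_mono \<phi>" "\<forall>l<k. \<forall>m m'. m \<le> m' \<longrightarrow> f (\<phi> m) l \<le> f (\<phi> m') l"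
    using dickson_subseq[of k f] by blast
  have "f (\<phi> 0) \<in> V" "f (\<phi> 1) \<in> V" using f(2) by auto
  moreover have "\<forall>l<k. f (\<phi> 0) l \<le> f (\<phi> 1) l" using \<phi>(2) by simp
  ultimately have "f (\<phi> 0) = f (\<phi> 1)" using anti by blast
  then have "\<phi> 0 = \<phi> 1" using f(1) by (simp add: inj_def)
  moreover have "\<phi> 0 < \<phi> 1" using \<phi>(1) unfolding strict_mono_def by simp
  ultimately show False by simp
qed




definition Irr :: "(nat \<Rightarrow> int) set \<Rightarrow> (nat \<Rightarrow> int) set" where
  "Irr S = {z\<in>S. z \<noteq> (\<lambda>_. 0) \<and> (\<forall>a\<in>S. \<forall>b\<in>S. z = (\<lambda>i. a i + b i) \<longrightarrow> a = (\<lambda>_. 0) \<or> b = (\<lambda>_. 0))}"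

locale hmon =
  fixes S :: "(nat \<Rightarrow> int) set" and nm :: "(nat \<Rightarrow> int) \<Rightarrow> nat"
  assumes zero: "(\<lambda>_. 0) \<in> S"
    and add: "\<And>a b. a \<in> S \<Longrightarrow> b \<in> S \<Longrightarrow> (\<lambda>i. a i + b i) \<in> S"
    and nm_add: "\<And>a b. a \<in> S \<Longrightarrow> b \<in> S \<Longrightarrow> nm (\<lambda>i. a i + b i) = nm a + nm b"
    and nm_zero: "\<And>a. a \<in> S \<Longrightarrow> nm a = 0 \<longleftrightarrow> a = (\<lambda>_. 0)"
begin

lemma smult: "a \<in> S \<Longrightarrow> (\<lambda>i. int c * a i) \<in> S"
proof (induction c)
  case 0 then show ?case using zero by simp
next
  case (Suc c)
  then have "(\<lambda>i. a i + int c * a i) \<in> S" using add by blast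
  then show ?case by (simp add: algebra_simps)
qed

lemma comb: "finite F \<Longrightarrow> F \<subseteq> S \<Longrightarrow> (\<lambda>i. \<Sum>g\<in>F. int (c g) * g i) \<in> S"
proof (induction F rule: finite_induct)
  case empty then show ?case using zero by simp
next
  case (insert x F)
  then have "(\<lambda>i. int (c x) * x i + (\<Sum>g\<in>F. int (c g) * g i)) \<in> S"
    using add[OF smult] by simp
  then show ?case using insert by simp
qed

lemma gen: "z \<in> S \<Longrightarrow> \<exists>F c. finite F \<and> F \<subseteq> Irr S \<and> (\<forall>g. g \<notin> F \<longrightarrow> c g = 0) \<and>
   z = (\<lambda>i. \<Sum>g\<in>F. int (c g) * g i)"
proof (induction "nm z" arbitrary: z rule: less_induct)
  case less
  show ?case
  proof (cases "z \<in> Irr S")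
    case True
    show ?thesis
      by (rule exI[of _ "{z}"], rule exI[of _ "\<lambda>g. if g = z then 1 else 0"]) (use True in auto)
  next
    case False
    show ?thesis
    proof (cases "z = (\<lambda>_. 0)")
      case True
      then show ?thesis by (intro exI[of _ "{}"] exI[of _ "\<lambda>_. 0"]) auto
    next
      case nz: False
      then obtain a b where ab: "a \<in> S" "b \<in> S" "z = (\<lambda>i. a i + b i)" "a \<noteq> (\<lambda>_. 0)" "b \<noteq> (\<lambda>_. 0)"
        using False less.prems unfolding Irr_def by blast
      have na: "nm a > 0" "nm b > 0" using nm_zero ab by auto
      have "nm z = nm a + nm b" using ab nm_add by simp
      then have lt: "nm a < nm z" "nm b < nm z" using na by auto
      obtain Fa ca where A: "finite Fa" "Fa \<subseteq> Irr S" "\<forall>g. g \<notin> Fa \<longrightarrow> ca g = 0"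
          "a = (\<lambda>i. \<Sum>g\<in>Fa. int (ca g) * g i)"
        using less.hyps[OF lt(1) ab(1)] by blast
      obtain Fb cb where B: "finite Fb" "Fb \<subseteq> Irr S" "\<forall>g. g \<notin> Fb \<longrightarrow> cb g = 0"
          "b = (\<lambda>i. \<Sum>g\<in>Fb. int (cb g) * g i)"
        using less.hyps[OF lt(2) ab(2)] by blast
      have "z = (\<lambda>i. \<Sum>g\<in>Fa \<union> Fb. int (ca g + cb g) * g i)"
      proof
        fix i
        have 1: "(\<Sum>g\<in>Fa \<union> Fb. int (ca g) * g i) = (\<Sum>g\<in>Fa. int (ca g) * g i)"
          by (rule sum.mono_neutral_right) (use A B in auto)
        have 2: "(\<Sum>g\<in>Fa \<union> Fb. int (cb g) * g i) = (\<Sum>g\<in>Fb. int (cb g) * g i)"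
          by (rule sum.mono_neutral_right) (use A B in auto)
        show "z i = (\<Sum>g\<in>Fa \<union> Fb. int (ca g + cb g) * g i)"
          using 1 2 A(4) B(4) ab(3) by (simp add: distrib_right sum.distrib)
      qed
      then show ?thesis
        by (intro exI[of _ "Fa \<union> Fb"] exI[of _ "\<lambda>g. ca g + cb g"]) (use A B in auto)
    qed
  qed
qed

lemma Irr_sub: "nat_generates G S \<Longrightarrow> Irr S \<subseteq> G"
proof
  fix z assume G: "nat_generates G S" and z: "z \<in> Irr S"
  then have zS: "z \<in> S" by (simp add: Irr_def)
  obtain F c where F: "finite F" "F \<subseteq> G" "z = (\<lambda>i. \<Sum>g\<in>F. int (c g) * g i)"
    using G zS unfolding nat_generates_def by blast
  have GS: "G \<subseteq> S" using G unfolding nat_generates_def by blast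
  have "\<exists>g0\<in>F. c g0 > 0 \<and> g0 \<noteq> (\<lambda>_. 0)"
  proof (rule ccontr)
    assume "\<not> ?thesis"
    then have "\<forall>g\<in>F. \<forall>i. int (c g) * g i = 0" by auto
    then have "z = (\<lambda>_. 0)" unfolding F(3) by (intro ext sum.neutral) blast
    then show False using z by (simp add: Irr_def)
  qed
  then obtain g0 where g0: "g0 \<in> F" "c g0 > 0" "g0 \<noteq> (\<lambda>_. 0)" by blast
  define c' where "c' = c(g0 := c g0 - 1)"
  define r where "r = (\<lambda>i. \<Sum>g\<in>F. int (c' g) * g i)"
  have rS: "r \<in> S" unfolding r_def using comb F GS by blast
  have g0S: "g0 \<in> S" using g0 F GS by blast
  have zsum: "z = (\<lambda>i. g0 i + r i)"
  proof
    fix i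
    have "z i = int (c g0) * g0 i + (\<Sum>g\<in>F - {g0}. int (c g) * g i)"
      using F(1,3) g0(1) by (simp add: sum.remove)
    moreover have "r i = int (c' g0) * g0 i + (\<Sum>g\<in>F - {g0}. int (c' g) * g i)"
      using F(1) g0(1) by (simp add: r_def sum.remove)
    moreover have "(\<Sum>g\<in>F - {g0}. int (c' g) * g i) = (\<Sum>g\<in>F - {g0}. int (c g) * g i)"
      by (rule sum.cong) (auto simp: c'_def)
    moreover have "int (c g0) = 1 + int (c' g0)" using g0(2) by (simp add: c'_def)
    ultimately show "z i = g0 i + r i" by (simp add: algebra_simps)
  qed
  then have "r = (\<lambda>_. 0)" using z g0S rS g0(3) unfolding Irr_def by blast
  with zsum have "z = g0" by simp
  then show "z \<in> G" using g0(1) F(2) by blast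
qed

lemma Irr_gen: "nat_generates (Irr S) S"
proof -
  have "Irr S \<subseteq> S" by (auto simp: Irr_def)
  moreover have "\<forall>z\<in>S. \<exists>F c. finite F \<and> F \<subseteq> Irr S \<and> z = (\<lambda>i. \<Sum>g\<in>F. int (c g) * g i)"
    using gen by blast
  ultimately show ?thesis unfolding nat_generates_def by blast
qed

lemma hb: "hilbert_basis S = Irr S"
  unfolding hilbert_basis_def
proof (rule the_equality)
  show "nat_generates (Irr S) S \<and> (\<forall>G'. G' \<subset> Irr S \<longrightarrow> \<not> nat_generates G' S)"
    using Irr_gen Irr_sub by blast
next
  fix G assume G: "nat_generates G S \<and> (\<forall>G'. G' \<subset> G \<longrightarrow> \<not> nat_generates G' S)"
  then have "Irr S \<subseteq> G" using Irr_sub by blast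
  then show "G = Irr S" using G Irr_gen by blast
qed

end




definition conf :: "(nat \<Rightarrow> int) \<Rightarrow> (nat \<Rightarrow> int) \<Rightarrow> bool" where
  "conf p w \<longleftrightarrow> (\<forall>i. (0 \<le> w i \<longrightarrow> 0 \<le> p i) \<and> (w i \<le> 0 \<longrightarrow> p i \<le> 0))"

definition prim :: "(nat \<Rightarrow> int) set \<Rightarrow> (nat \<Rightarrow> int) \<Rightarrow> bool" where
  "prim K w \<longleftrightarrow> w \<in> K \<and> w \<noteq> (\<lambda>_. 0) \<and>
    (\<forall>u\<in>K. \<forall>v\<in>K. w = (\<lambda>i. u i + v i) \<longrightarrow> conf u w \<longrightarrow> conf v w \<longrightarrow> u = (\<lambda>_. 0) \<or> v = (\<lambda>_. 0))"

definition kerS :: "nat \<Rightarrow> nat \<Rightarrow> (nat \<Rightarrow> nat \<Rightarrow> int) \<Rightarrow> (nat \<Rightarrow> int) set" where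
  "kerS m k M = {z. (\<forall>i. k \<le> i \<longrightarrow> z i = 0) \<and> (\<forall>r<m. (\<Sum>j<k. M r j * z j) = 0)}"

lemma orth_hmon: "hmon (kernel_orthant m k M \<sigma>) (\<lambda>z. \<Sum>i<k. nat \<bar>z i\<bar>)"
proof
  show "(\<lambda>_. 0) \<in> kernel_orthant m k M \<sigma>" by (simp add: kernel_orthant_def)
next
  fix a b assume a: "a \<in> kernel_orthant m k M \<sigma>" and b: "b \<in> kernel_orthant m k M \<sigma>"
  show "(\<lambda>i. a i + b i) \<in> kernel_orthant m k M \<sigma>"
    using a b by (auto simp: kernel_orthant_def distrib_left sum.distrib split: if_splits)
       (metis add_nonneg_nonneg add_nonpos_nonpos)+
  have "\<And>i. i < k \<Longrightarrow> nat \<bar>a i + b i\<bar> = nat \<bar>a i\<bar> + nat \<bar>b i\<bar>"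
  proof -
    fix i assume "i < k"
    then have "(0 \<le> a i \<and> 0 \<le> b i) \<or> (a i \<le> 0 \<and> b i \<le> 0)"
      using a b by (auto simp: kernel_orthant_def split: if_splits)
    then show "nat \<bar>a i + b i\<bar> = nat \<bar>a i\<bar> + nat \<bar>b i\<bar>" by auto
  qed
  then show "(\<Sum>i<k. nat \<bar>a i + b i\<bar>) = (\<Sum>i<k. nat \<bar>a i\<bar>) + (\<Sum>i<k. nat \<bar>b i\<bar>)"
    by (simp add: sum.distrib[symmetric])
next
  fix a assume a: "a \<in> kernel_orthant m k M \<sigma>"
  show "((\<Sum>i<k. nat \<bar>a i\<bar>) = 0) = (a = (\<lambda>_. 0))"
  proof
    assume "(\<Sum>i<k. nat \<bar>a i\<bar>) = 0"
    then have "\<forall>i<k. a i = 0" by simp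
    then show "a = (\<lambda>_. 0)" using a by (auto simp: kernel_orthant_def) (metis not_le)
  qed simp
qed

lemma graver_prim:
  assumes "z \<in> graver_basis m k M"
  shows "prim (kerS m k M) z"
proof -
  obtain \<sigma> where z: "z \<in> Irr (kernel_orthant m k M \<sigma>)" "z \<noteq> (\<lambda>_. 0)"
    using assms unfolding graver_basis_def hmon.hb[OF orth_hmon] by blast
  let ?S = "kernel_orthant m k M \<sigma>"
  have zS: "z \<in> ?S" using z by (simp add: Irr_def)
  have zK: "z \<in> kerS m k M" using zS by (simp add: kernel_orthant_def kerS_def)
  have inS: "u \<in> ?S" if "u \<in> kerS m k M" "conf u z" for u
    using that zS unfolding kernel_orthant_def kerS_def conf_def by (auto split: if_splits)
  show ?thesis
    unfolding prim_def
  proof (intro conjI ballI impI zK z(2))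
    fix u v assume u: "u \<in> kerS m k M" and v: "v \<in> kerS m k M" and e: "z = (\<lambda>i. u i + v i)"
      and cu: "conf u z" and cv: "conf v z"
    show "u = (\<lambda>_. 0) \<or> v = (\<lambda>_. 0)"
      using z(1) inS[OF u cu] inS[OF v cv] e unfolding Irr_def by blast
  qed
qed




lemma conf_trans: "conf p u \<Longrightarrow> conf u w \<Longrightarrow> conf p w"
  unfolding conf_def by blast

lemma conf_refl: "conf w w" unfolding conf_def by simp

locale zlat =
  fixes K :: "(nat \<Rightarrow> int) set" and k :: nat
  assumes supp: "\<And>w i. w \<in> K \<Longrightarrow> k \<le> i \<Longrightarrow> w i = 0"
    and add: "\<And>u v. u \<in> K \<Longrightarrow> v \<in> K \<Longrightarrow> (\<lambda>i. u i + v i) \<in> K"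
    and sub: "\<And>u v. u \<in> K \<Longrightarrow> v \<in> K \<Longrightarrow> (\<lambda>i. u i - v i) \<in> K"
    and zero: "(\<lambda>_. 0) \<in> K"
begin

definition \<phi> :: "(nat \<Rightarrow> int) \<Rightarrow> nat \<Rightarrow> nat" where
  "\<phi> w l = (if l < 2*k then (if even l then nat (w (l div 2)) else nat (- w (l div 2))) else 0)"

lemma phi_le:
  assumes "\<forall>l<2*k. \<phi> p l \<le> \<phi> q l" "i < k"
  shows "(0 \<le> q i \<longrightarrow> 0 \<le> p i \<and> p i \<le> q i) \<and> (q i \<le> 0 \<longrightarrow> p i \<le> 0 \<and> q i \<le> p i)"
proof -
  have "2*i < 2*k" "2*i+1 < 2*k" using assms(2) by auto
  then have "\<phi> p (2*i) \<le> \<phi> q (2*i)" "\<phi> p (2*i+1) \<le> \<phi> q (2*i+1)" using assms(1) by blast+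
  then have "nat (p i) \<le> nat (q i)" "nat (- p i) \<le> nat (- q i)"
    using assms(2) by (auto simp: \<phi>_def)
  then show ?thesis by auto
qed

lemma prim_finite: "finite {w. prim K w}"
proof -
  let ?P = "{w. prim K w}"
  have inj: "inj_on \<phi> ?P"
  proof
    fix p q assume p: "p \<in> ?P" and q: "q \<in> ?P" and e: "\<phi> p = \<phi> q"
    show "p = q"
    proof
      fix i
      show "p i = q i"
      proof (cases "i < k")
        case True
        then show ?thesis using phi_le[of p q i] phi_le[of q p i] e by auto
      next
        case False
        have "p \<in> K" "q \<in> K" using p q by (auto simp: prim_def)
        then show ?thesis using supp False by (metis not_le)
      qed
    qed
  qed
  have "finite (\<phi> ` ?P)"
  proof (rule antichain_finite[of _ "2*k"])
    show "\<forall>v\<in>\<phi> ` ?P. \<forall>l\<ge>2 * k. v l = 0" by (auto simp: \<phi>_def)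
    show "\<forall>v\<in>\<phi> ` ?P. \<forall>w\<in>\<phi> ` ?P. (\<forall>l<2 * k. v l \<le> w l) \<longrightarrow> v = w"
    proof (intro ballI impI)
      fix v w assume "v \<in> \<phi> ` ?P" "w \<in> \<phi> ` ?P" and le: "\<forall>l<2 * k. v l \<le> w l"
      then obtain p q where p: "prim K p" and q: "prim K q" and vw: "v = \<phi> p" "w = \<phi> q" by auto
      have pK: "p \<in> K" and qK: "q \<in> K" using p q by (auto simp: prim_def)
      have le': "\<forall>l<2*k. \<phi> p l \<le> \<phi> q l" using le vw by simp
      have c1: "conf p q"
        unfolding conf_def
      proof
        fix i show "(0 \<le> q i \<longrightarrow> 0 \<le> p i) \<and> (q i \<le> 0 \<longrightarrow> p i \<le> 0)"
          using phi_le[OF le', of i] supp[OF pK, of i] supp[OF qK, of i] by (cases "i < k") auto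
      qed
      have c2: "conf (\<lambda>i. q i - p i) q"
        unfolding conf_def
      proof
        fix i show "(0 \<le> q i \<longrightarrow> 0 \<le> q i - p i) \<and> (q i \<le> 0 \<longrightarrow> q i - p i \<le> 0)"
          using phi_le[OF le', of i] supp[OF pK, of i] supp[OF qK, of i] by (cases "i < k") auto
      qed
      have H: "\<forall>u\<in>K. \<forall>v\<in>K. q = (\<lambda>i. u i + v i) \<longrightarrow> conf u q \<longrightarrow> conf v q \<longrightarrow> u = (\<lambda>_. 0) \<or> v = (\<lambda>_. 0)"
        using q unfolding prim_def by blast
      have "p = (\<lambda>_. 0) \<or> (\<lambda>i. q i - p i) = (\<lambda>_. 0)"
        using H[rule_format, OF pK sub[OF qK pK]] c1 c2 by simp
      then have "p = q" using p unfolding prim_def by (auto simp: fun_eq_iff)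
      then show "v = w" using vw by simp
    qed
  qed
  then show ?thesis using finite_imageD inj by blast
qed

definition nm :: "(nat \<Rightarrow> int) \<Rightarrow> nat" where "nm w = (\<Sum>i<k. nat \<bar>w i\<bar>)"

lemma decomp:
  assumes e: "\<And>w. prim K w \<longleftrightarrow> (\<exists>q<Kn. w = e q)"
  shows "w \<in> K \<Longrightarrow> \<exists>m::nat\<Rightarrow>nat. w = (\<lambda>j. \<Sum>q<Kn. int (m q) * e q j) \<and>
          (\<forall>q<Kn. 0 < m q \<longrightarrow> conf (e q) w)"
proof (induction "nm w" arbitrary: w rule: less_induct)
  case less
  show ?case
  proof (cases "prim K w")
    case True
    then obtain q0 where q0: "q0 < Kn" "w = e q0" using e by blast
    show ?thesis
    proof (rule exI[of _ "\<lambda>q. if q = q0 then 1 else 0"], intro conjI allI impI)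
      have "\<And>j. (\<Sum>q<Kn. int (if q = q0 then 1 else 0) * e q j) = e q0 j"
      proof -
        fix j
        have "(\<Sum>q<Kn. int (if q = q0 then 1 else 0) * e q j) = (\<Sum>q<Kn. if q = q0 then e q j else 0)"
          by (rule sum.cong) auto
        also have "\<dots> = e q0 j" using q0(1) by simp
        finally show "(\<Sum>q<Kn. int (if q = q0 then 1 else 0) * e q j) = e q0 j" .
      qed
      then show "w = (\<lambda>j. \<Sum>q<Kn. int (if q = q0 then 1 else 0) * e q j)" using q0 by simp
      fix q assume "q < Kn" "0 < (if q = q0 then 1 else 0::nat)"
      then show "conf (e q) w" using q0 conf_refl by (simp split: if_splits)
    qed
  next
    case np: False
    show ?thesis
    proof (cases "w = (\<lambda>_. 0)")
      case True
      then show ?thesis by (intro exI[of _ "\<lambda>_. 0"]) auto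
    next
      case False
      then obtain u v where uv: "u \<in> K" "v \<in> K" "w = (\<lambda>i. u i + v i)" "conf u w" "conf v w"
          "u \<noteq> (\<lambda>_. 0)" "v \<noteq> (\<lambda>_. 0)"
        using np less.prems unfolding prim_def by blast
      have nmadd: "nm w = nm u + nm v"
      proof -
        have "\<And>i. nat \<bar>w i\<bar> = nat \<bar>u i\<bar> + nat \<bar>v i\<bar>"
        proof -
          fix i
          have "(0 \<le> u i \<and> 0 \<le> v i) \<or> (u i \<le> 0 \<and> v i \<le> 0)"
            using uv(4,5) unfolding conf_def by (metis linear)
          then show "nat \<bar>w i\<bar> = nat \<bar>u i\<bar> + nat \<bar>v i\<bar>" using uv(3) by auto
        qed
        then show ?thesis unfolding nm_def by (simp add: sum.distrib)
      qed
      have pos: "nm u > 0" "nm v > 0"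
      proof -
        obtain i where "u i \<noteq> 0" using uv(6) by auto
        then have "i < k" using supp[OF uv(1)] by (metis not_le)
        then show "nm u > 0" unfolding nm_def using \<open>u i \<noteq> 0\<close>
          by (metis (no_types, lifting) finite_lessThan lessThan_iff not_gr_zero sum_eq_0_iff zero_less_nat_eq zero_less_abs_iff)
      next
        obtain i where "v i \<noteq> 0" using uv(7) by auto
        then have "i < k" using supp[OF uv(2)] by (metis not_le)
        then show "nm v > 0" unfolding nm_def using \<open>v i \<noteq> 0\<close>
          by (metis (no_types, lifting) finite_lessThan lessThan_iff not_gr_zero sum_eq_0_iff zero_less_nat_eq zero_less_abs_iff)
      qed
      obtain mu where mu: "u = (\<lambda>j. \<Sum>q<Kn. int (mu q) * e q j)" "\<forall>q<Kn. 0 < mu q \<longrightarrow> conf (e q) u"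
        using less.hyps[of u] nmadd pos uv(1) by auto
      obtain mv where mv: "v = (\<lambda>j. \<Sum>q<Kn. int (mv q) * e q j)" "\<forall>q<Kn. 0 < mv q \<longrightarrow> conf (e q) v"
        using less.hyps[of v] nmadd pos uv(2) by auto
      show ?thesis
      proof (intro exI[of _ "\<lambda>q. mu q + mv q"] conjI allI impI)
        show "w = (\<lambda>j. \<Sum>q<Kn. int (mu q + mv q) * e q j)"
          using uv(3) mu(1) mv(1) by (simp add: distrib_right sum.distrib)
        fix q assume "q < Kn" "0 < mu q + mv q"
        then show "conf (e q) w" using mu(2) mv(2) uv(4,5) conf_trans by (meson add_gr_0)
      qed
    qed
  qed
qed

end




lemma if01_mult: "(if P then 1 else 0) * (x::int) = (if P then x else 0)" by simp

lemma sum_add_split: "(\<Sum>c<(a::nat)+b. f c) = (\<Sum>c<a. f c) + (\<Sum>t<b. f (a + t)::'a::comm_monoid_add)"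
  by (induction b) (simp_all add: add.assoc)

lemma sum_blocks: "(\<Sum>c<(N::nat)*n. f c) = (\<Sum>i<N. \<Sum>j<n. f (i*n + j)::'a::comm_monoid_add)"
proof (induction N)
  case 0 then show ?case by simp
next
  case (Suc N)
  have "(\<Sum>c<Suc N*n. f c) = (\<Sum>c<N*n + n. f c)" by (simp add: add.commute)
  also have "\<dots> = (\<Sum>c<N*n. f c) + (\<Sum>j<n. f (N*n + j))" by (rule sum_add_split)
  finally show ?case using Suc by simp
qed

lemma dm: "(j::nat) < n \<Longrightarrow> (i*n+j) div n = i \<and> (i*n+j) mod n = j"
  by (metis add.commute div_mult_self1 div_less less_nat_zero_code mod_mult_self1 mod_less plus_nat.add_0 mult.commute)

lemma blk_lt: "i < (N::nat) \<Longrightarrow> j < n \<Longrightarrow> i*n + j < N*n"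
proof -
  assume "i < N" "j < n"
  then have "i*n + j < i*n + n" by simp
  also have "\<dots> = Suc i * n" by simp
  also have "\<dots> \<le> N*n" using \<open>i < N\<close> by (intro mult_right_mono) auto
  finally show ?thesis .
qed

context
  fixes da db s n :: nat and A B C :: "nat \<Rightarrow> nat \<Rightarrow> int" and N :: nat
begin

abbreviation "MM \<equiv> block_matrix da db s n A B C N"

lemma rowsum_split:
  "(\<Sum>c<N*n + N*s. MM r c * z c) =
    (\<Sum>i<N. \<Sum>j<n. MM r (i*n+j) * z (i*n+j)) + (\<Sum>i<N. \<Sum>t<s. MM r (N*n + (i*s+t)) * z (N*n + (i*s+t)))"
  by (simp add: sum_add_split sum_blocks)

lemma R1:
  assumes "r < db"
  shows "(\<Sum>c<N*n + N*s. MM r c * z c) = (\<Sum>i<N. \<Sum>j<n. B r j * z (i*n+j))"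
proof -
  have "\<And>i j. i < N \<Longrightarrow> j < n \<Longrightarrow> MM r (i*n+j) = B r j"
    using assms blk_lt dm by (simp add: block_matrix_def)
  moreover have "\<And>i t. MM r (N*n + (i*s+t)) = 0"
    using assms by (simp add: block_matrix_def)
  ultimately show ?thesis unfolding rowsum_split by simp
qed

lemma R2:
  assumes "i0 < N" "a < da"
  shows "(\<Sum>c<N*n + N*s. MM (db + (i0*da + a)) c * z c) = (\<Sum>j<n. A a j * z (i0*n+j))"
proof -
  have lt: "i0*da + a < N*da" using blk_lt assms by simp
  have d: "(i0*da + a) div da = i0" "(i0*da + a) mod da = a" using dm assms(2) by blast+
  have "\<And>i j. i < N \<Longrightarrow> j < n \<Longrightarrow> MM (db + (i0*da + a)) (i*n+j) = (if i = i0 then A a j else 0)"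
    using lt d blk_lt dm by (auto simp: block_matrix_def Let_def)
  moreover have "\<And>i t. MM (db + (i0*da + a)) (N*n + (i*s+t)) = 0"
    using lt by (simp add: block_matrix_def Let_def)
  ultimately have "(\<Sum>c<N*n + N*s. MM (db + (i0*da + a)) c * z c) =
      (\<Sum>i<N. \<Sum>j<n. (if i = i0 then A a j else 0) * z (i*n+j))" unfolding rowsum_split by simp
  also have "\<dots> = (\<Sum>i<N. if i = i0 then (\<Sum>j<n. A a j * z (i*n+j)) else 0)"
    by (rule sum.cong) auto
  also have "\<dots> = (\<Sum>j<n. A a j * z (i0*n+j))" using assms(1) by simp
  finally show ?thesis .
qed

lemma R3:
  assumes "i0 < N" "t0 < s"
  shows "(\<Sum>c<N*n + N*s. MM (db + N*da + (i0*s + t0)) c * z c) =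
     (\<Sum>j<n. C t0 j * z (i0*n+j)) + z (N*n + (i0*s+t0))"
proof -
  let ?r = "db + N*da + (i0*s + t0)"
  have d: "(i0*s + t0) div s = i0" "(i0*s + t0) mod s = t0" using dm assms(2) by blast+
  have "\<And>i j. i < N \<Longrightarrow> j < n \<Longrightarrow> MM ?r (i*n+j) = (if i = i0 then C t0 j else 0)"
    using d blk_lt dm by (auto simp: block_matrix_def Let_def)
  moreover have "\<And>i t. i < N \<Longrightarrow> t < s \<Longrightarrow> MM ?r (N*n + (i*s+t)) = (if i = i0 \<and> t = t0 then 1 else 0)"
  proof -
    fix i t assume it: "i < N" "t < s"
    have "(i*s+t = i0*s+t0) = (i = i0 \<and> t = t0)" using dm it(2) assms(2) by metis
    then show "MM ?r (N*n + (i*s+t)) = (if i = i0 \<and> t = t0 then 1 else 0)"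
      using d by (auto simp: block_matrix_def Let_def)
  qed
  ultimately have "(\<Sum>c<N*n + N*s. MM ?r c * z c) =
      (\<Sum>i<N. \<Sum>j<n. (if i = i0 then C t0 j else 0) * z (i*n+j)) +
      (\<Sum>i<N. \<Sum>t<s. (if i = i0 \<and> t = t0 then 1 else 0) * z (N*n + (i*s+t)))"
    unfolding rowsum_split by simp
  also have "(\<Sum>i<N. \<Sum>j<n. (if i = i0 then C t0 j else 0) * z (i*n+j)) =
     (\<Sum>i<N. if i = i0 then (\<Sum>j<n. C t0 j * z (i*n+j)) else 0)"
    by (rule sum.cong) auto
  also have "(\<Sum>i<N. \<Sum>t<s. (if i = i0 \<and> t = t0 then 1 else 0) * z (N*n + (i*s+t))) =
     (\<Sum>i<N. if i = i0 then (\<Sum>t<s. if t = t0 then z (N*n + (i*s+t)) else 0) else 0)"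
    by (rule sum.cong) (auto simp: if01_mult)
  finally have X: "(\<Sum>c<N*n + N*s. MM ?r c * z c) =
     (\<Sum>i<N. if i = i0 then \<Sum>j<n. C t0 j * z (i * n + j) else 0) +
     (\<Sum>i<N. if i = i0 then \<Sum>t<s. if t = t0 then z (N * n + (i * s + t)) else 0 else 0)" .
  have Y: "(\<Sum>t<s. if t = t0 then z (N*n + (i0*s+t)) else 0) = z (N*n + (i0*s+t0))"
    using assms by simp
  show ?thesis using X Y assms by simp
qed

end



definition Klow :: "nat \<Rightarrow> nat \<Rightarrow> nat \<Rightarrow> (nat \<Rightarrow> nat \<Rightarrow> int) \<Rightarrow> (nat \<Rightarrow> nat \<Rightarrow> int) \<Rightarrow> (nat \<Rightarrow> int) set" where
  "Klow da s n A C = {w. (\<forall>j. n+s \<le> j \<longrightarrow> w j = 0) \<and> (\<forall>a<da. (\<Sum>j<n. A a j * w j) = 0) \<and>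
     (\<forall>t<s. (\<Sum>j<n. C t j * w j) + w (n+t) = 0)}"

lemma Klow_zlat: "zlat (Klow da s n A C) (n+s)"
proof
  fix u v assume u: "u \<in> Klow da s n A C" and v: "v \<in> Klow da s n A C"
  have e1: "(\<Sum>j<n. C t j * (u j + v j)) + (u (n+t) + v (n+t)) =
     ((\<Sum>j<n. C t j * u j) + u (n+t)) + ((\<Sum>j<n. C t j * v j) + v (n+t))" for t
    by (simp add: distrib_left sum.distrib)
  have e2: "(\<Sum>j<n. C t j * (u j - v j)) + (u (n+t) - v (n+t)) =
     ((\<Sum>j<n. C t j * u j) + u (n+t)) - ((\<Sum>j<n. C t j * v j) + v (n+t))" for t
    by (simp add: right_diff_distrib sum_subtractf)
  have e3: "(\<Sum>j<n. A a j * (u j + v j)) = (\<Sum>j<n. A a j * u j) + (\<Sum>j<n. A a j * v j)" for a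
    by (simp add: distrib_left sum.distrib)
  have e4: "(\<Sum>j<n. A a j * (u j - v j)) = (\<Sum>j<n. A a j * u j) - (\<Sum>j<n. A a j * v j)" for a
    by (simp add: right_diff_distrib sum_subtractf)
  show "(\<lambda>i. u i + v i) \<in> Klow da s n A C" "(\<lambda>i. u i - v i) \<in> Klow da s n A C"
    using u v unfolding Klow_def mem_Collect_eq e1 e2 e3 e4 by simp_all
qed (auto simp: Klow_def)

lemma Klow_comb:
  assumes "\<forall>q<K. e q \<in> Klow da s n A C"
  shows "(\<lambda>j. \<Sum>q<K. (c q::int) * e q j) \<in> Klow da s n A C"
proof -
  have "(\<Sum>j<n. A a j * (\<Sum>q<K. c q * e q j)) = (\<Sum>q<K. c q * (\<Sum>j<n. A a j * e q j))" for a
    by (simp add: sum_distrib_left sum_distrib_right sum.swap[of _ "{..<n}"] algebra_simps)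
  moreover have "(\<Sum>j<n. C t j * (\<Sum>q<K. c q * e q j)) + (\<Sum>q<K. c q * e q (n+t)) =
      (\<Sum>q<K. c q * ((\<Sum>j<n. C t j * e q j) + e q (n+t)))" for t
    by (simp add: sum_distrib_left sum_distrib_right sum.swap[of _ "{..<n}"] algebra_simps sum.distrib)
  ultimately show ?thesis using assms by (auto simp: Klow_def)
qed

lemma rows_cover:
  assumes "(r::nat) < db + N*da + N*s"
  shows "r < db \<or> (\<exists>i0<N. \<exists>a<da. r = db + (i0*da + a)) \<or> (\<exists>i0<N. \<exists>t<s. r = db + N*da + (i0*s+t))"
proof -
  have G: "\<exists>i0<N. \<exists>a<d. x = i0*d + a" if "x < N*d" for x d :: nat
  proof -
    have "d > 0" using that by (cases d) auto
    then have "x = (x div d)*d + x mod d" "x mod d < d" "x div d < N"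
      using that by (auto simp: less_mult_imp_div_less)
    then show ?thesis by blast
  qed
  show ?thesis
  proof (cases "r < db")
    case False
    show ?thesis
    proof (cases "r - db < N*da")
      case True
      then obtain i0 a where "i0 < N" "a < da" "r - db = i0*da + a" using G by blast
      then show ?thesis using False by (metis le_add_diff_inverse not_less)
    next
      case F2: False
      then have "r - db - N*da < N*s" using assms False by linarith
      then obtain i0 t where "i0 < N" "t < s" "r - db - N*da = i0*s + t" using G by blast
      then show ?thesis using False F2 by (metis add.assoc le_add_diff_inverse not_less)
    qed
  qed simp
qed

context
  fixes da db s n :: nat and A B C :: "nat \<Rightarrow> nat \<Rightarrow> int" and N :: nat
begin

definition brk :: "(nat \<Rightarrow> int) \<Rightarrow> nat \<Rightarrow> nat \<Rightarrow> int" where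
  "brk z i = (\<lambda>j. if j < n then z (i*n+j) else if j < n+s then z (N*n + (i*s + (j-n))) else 0)"

definition unbrk :: "(nat \<Rightarrow> nat \<Rightarrow> int) \<Rightarrow> nat \<Rightarrow> int" where
  "unbrk b c = (if c < N*n then b (c div n) (c mod n)
     else if c < N*n + N*s then b ((c - N*n) div s) (n + (c - N*n) mod s) else 0)"

lemma ker_char:
  "z \<in> kerS (block_rows da db s N) (block_cols n s N) (block_matrix da db s n A B C N) \<longleftrightarrow>
   (\<forall>c. N*n+N*s \<le> c \<longrightarrow> z c = 0) \<and> (\<forall>i<N. brk z i \<in> Klow da s n A C) \<and>
   (\<forall>r<db. (\<Sum>i<N. \<Sum>j<n. B r j * brk z i j) = 0)"
proof -
  let ?M = "block_matrix da db s n A B C N"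
  have bB: "(\<Sum>i<N. \<Sum>j<n. B r j * brk z i j) = (\<Sum>i<N. \<Sum>j<n. B r j * z (i*n+j))" for r
    by (simp add: brk_def)
  have bA: "(\<Sum>j<n. A a j * brk z i j) = (\<Sum>j<n. A a j * z (i*n+j))" for a i
    by (simp add: brk_def)
  have bC: "(\<Sum>j<n. C t j * brk z i j) + brk z i (n+t) = (\<Sum>j<n. C t j * z (i*n+j)) + z (N*n + (i*s+t))"
    if "t < s" for t i
    using that by (simp add: brk_def)
  have r1: "(\<forall>r<db. (\<Sum>c<N*n + N*s. ?M r c * z c) = 0) \<longleftrightarrow> (\<forall>r<db. (\<Sum>i<N. \<Sum>j<n. B r j * brk z i j) = 0)"
    using R1 bB by simp
  have r2: "(\<forall>i0<N. \<forall>a<da. (\<Sum>c<N*n + N*s. ?M (db + (i0*da + a)) c * z c) = 0) \<longleftrightarrow>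
      (\<forall>i0<N. \<forall>a<da. (\<Sum>j<n. A a j * brk z i0 j) = 0)"
    using R2 bA by simp
  have r3: "(\<forall>i0<N. \<forall>t<s. (\<Sum>c<N*n + N*s. ?M (db + N*da + (i0*s + t)) c * z c) = 0) \<longleftrightarrow>
      (\<forall>i0<N. \<forall>t<s. (\<Sum>j<n. C t j * brk z i0 j) + brk z i0 (n+t) = 0)"
    using R3 bC by simp
  have rows: "(\<forall>r<db + N*da + N*s. (\<Sum>c<N*n + N*s. ?M r c * z c) = 0) \<longleftrightarrow>
     (\<forall>r<db. (\<Sum>c<N*n + N*s. ?M r c * z c) = 0) \<and>
     (\<forall>i0<N. \<forall>a<da. (\<Sum>c<N*n + N*s. ?M (db + (i0*da + a)) c * z c) = 0) \<and>
     (\<forall>i0<N. \<forall>t<s. (\<Sum>c<N*n + N*s. ?M (db + N*da + (i0*s + t)) c * z c) = 0)"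
  proof
    assume H: "\<forall>r<db + N*da + N*s. (\<Sum>c<N*n + N*s. ?M r c * z c) = 0"
    have "db + (i0*da + a) < db + N*da + N*s" if "i0 < N" "a < da" for i0 a
      using blk_lt[of i0 N a da] that by simp
    moreover have "db + N*da + (i0*s + t) < db + N*da + N*s" if "i0 < N" "t < s" for i0 t
      using blk_lt[of i0 N t s] that by simp
    ultimately show "(\<forall>r<db. (\<Sum>c<N*n + N*s. ?M r c * z c) = 0) \<and>
     (\<forall>i0<N. \<forall>a<da. (\<Sum>c<N*n + N*s. ?M (db + (i0*da + a)) c * z c) = 0) \<and>
     (\<forall>i0<N. \<forall>t<s. (\<Sum>c<N*n + N*s. ?M (db + N*da + (i0*s + t)) c * z c) = 0)"
      using H by (auto intro!: H[rule_format] simp del: add_less_cancel_left)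
  next
    assume H: "(\<forall>r<db. (\<Sum>c<N*n + N*s. ?M r c * z c) = 0) \<and>
     (\<forall>i0<N. \<forall>a<da. (\<Sum>c<N*n + N*s. ?M (db + (i0*da + a)) c * z c) = 0) \<and>
     (\<forall>i0<N. \<forall>t<s. (\<Sum>c<N*n + N*s. ?M (db + N*da + (i0*s + t)) c * z c) = 0)"
    show "\<forall>r<db + N*da + N*s. (\<Sum>c<N*n + N*s. ?M r c * z c) = 0"
    proof (intro allI impI)
      fix r assume "r < db + N*da + N*s"
      then show "(\<Sum>c<N*n + N*s. ?M r c * z c) = 0" using rows_cover H by blast
    qed
  qed
  have supp: "(\<forall>i. N*n+N*s \<le> i \<longrightarrow> z i = 0) \<Longrightarrow> (\<forall>i<N. brk z i \<in> Klow da s n A C) \<longleftrightarrow>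
     (\<forall>i0<N. \<forall>a<da. (\<Sum>j<n. A a j * brk z i0 j) = 0) \<and>
     (\<forall>i0<N. \<forall>t<s. (\<Sum>j<n. C t j * brk z i0 j) + brk z i0 (n+t) = 0)"
    by (auto simp: Klow_def brk_def)
  show ?thesis
    unfolding kerS_def block_rows_def block_cols_def mem_Collect_eq rows r1 r2 r3
    using supp by blast
qed

lemma unbrk_supp: "N*n+N*s \<le> c \<Longrightarrow> unbrk b c = 0"
  by (simp add: unbrk_def)

lemma unbrk_idx: "c < N*n+N*s \<Longrightarrow> \<exists>i<N. \<exists>j<n+s. \<forall>b. unbrk b c = b i j"
proof -
  assume c: "c < N*n+N*s"
  show ?thesis
  proof (cases "c < N*n")
    case True
    then have "n > 0" by (cases n) auto
    then have "c div n < N" "c mod n < n + s" using True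
      by (auto simp: less_mult_imp_div_less intro: less_le_trans[OF mod_less_divisor])
    then show ?thesis using True by (auto simp: unbrk_def)
  next
    case False
    then have c': "c - N*n < N*s" using c by linarith
    then have "s > 0" by (cases s) auto
    then have "(c - N*n) div s < N" "n + (c - N*n) mod s < n + s" using c'
      by (auto simp: less_mult_imp_div_less)
    then show ?thesis using False c unfolding unbrk_def
      by (intro exI[of _ "(c - N*n) div s"] conjI exI[of _ "n + (c - N * n) mod s"]) simp_all
  qed
qed

lemma brk_unbrk:
  assumes "i < N" "\<forall>j. n+s \<le> j \<longrightarrow> b i j = 0"
  shows "brk (unbrk b) i = b i"
proof
  fix j
  show "brk (unbrk b) i j = b i j"
  proof (cases "j < n")
    case True
    then show ?thesis using assms blk_lt[of i N j n] dm[OF True, of i] by (simp add: brk_def unbrk_def)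
  next
    case False
    show ?thesis
    proof (cases "j < n+s")
      case True
      then have js: "j - n < s" using False by simp
      have lt: "i*s + (j-n) < N*s" using blk_lt[OF assms(1) js] .
      have "\<not> N*n + (i*s + (j-n)) < N*n" by simp
      moreover have "N*n + (i*s + (j-n)) < N*n + N*s" using lt by simp
      ultimately show ?thesis using dm[OF js, of i] False True
        by (simp add: brk_def unbrk_def)
    next
      case F2: False
      then show ?thesis using assms False by (simp add: brk_def)
    qed
  qed
qed

lemma unbrk_brk:
  assumes "\<forall>c. N*n+N*s \<le> c \<longrightarrow> z c = 0"
  shows "unbrk (brk z) = z"
proof
  fix c
  show "unbrk (brk z) c = z c"
  proof (cases "c < N*n")
    case True
    then have "n > 0" by (cases n) auto
    then have "c mod n < n" by simp
    then show ?thesis using True by (simp add: unbrk_def brk_def)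
  next
    case False
    show ?thesis
    proof (cases "c < N*n+N*s")
      case True
      then have c': "c - N*n < N*s" using False by linarith
      then have "s > 0" by (cases s) auto
      then have "(c - N*n) mod s < s" by simp
      moreover have "N * n + ((c - N * n) div s * s + (c - N * n) mod s) = c"
        using False by simp
      ultimately show ?thesis using True False by (simp add: unbrk_def brk_def)
    next
      case F2: False
      then show ?thesis using assms by (simp add: unbrk_def)
    qed
  qed
qed

lemma unbrk_add: "unbrk (\<lambda>i j. b1 i j + b2 i j) c = unbrk b1 c + unbrk b2 c"
  by (simp add: unbrk_def)

lemma unbrk_conf:
  assumes "\<forall>i<N. conf (b i) (w i)"
  shows "conf (unbrk b) (unbrk w)"
  unfolding conf_def
proof
  fix c
  show "(0 \<le> unbrk w c \<longrightarrow> 0 \<le> unbrk b c) \<and> (unbrk w c \<le> 0 \<longrightarrow> unbrk b c \<le> 0)"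
  proof (cases "c < N*n+N*s")
    case True
    then obtain i j where "i < N" "\<forall>b. unbrk b c = b i j" using unbrk_idx by blast
    then show ?thesis using assms unfolding conf_def by simp
  next
    case False then show ?thesis by (simp add: unbrk_supp)
  qed
qed

lemma unbrk_ker:
  assumes "\<forall>i<N. b i \<in> Klow da s n A C" "\<forall>r<db. (\<Sum>i<N. \<Sum>j<n. B r j * b i j) = 0"
  shows "unbrk b \<in> kerS (block_rows da db s N) (block_cols n s N) (block_matrix da db s n A B C N)"
proof -
  have bb: "\<forall>i<N. brk (unbrk b) i = b i"
    using assms(1) brk_unbrk by (auto simp: Klow_def)
  show ?thesis unfolding ker_char using bb assms unbrk_supp by simp
qed

end



lemma split_nat_sum:
  fixes f :: "nat \<Rightarrow> nat"
  shows "t \<le> (\<Sum>i<N. f i) \<Longrightarrow> \<exists>f'. (\<forall>i. f' i \<le> f i) \<and> (\<Sum>i<N. f' i) = t"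
proof (induction N arbitrary: t)
  case 0 then show ?case by (intro exI[of _ "\<lambda>_. 0"]) simp
next
  case (Suc N)
  show ?case
  proof (cases "t \<le> (\<Sum>i<N. f i)")
    case True
    then obtain f' where f': "\<forall>i. f' i \<le> f i" "(\<Sum>i<N. f' i) = t" using Suc.IH by blast
    have "(\<Sum>i<N. (f'(N := 0)) i) = (\<Sum>i<N. f' i)" by (rule sum.cong) auto
    then show ?thesis using f' by (intro exI[of _ "f'(N := 0)"]) auto
  next
    case False
    have "(\<Sum>i<N. (f(N := t - (\<Sum>i<N. f i))) i) = (\<Sum>i<N. f i)" by (rule sum.cong) auto
    then show ?thesis using False Suc.prems by (intro exI[of _ "f(N := t - (\<Sum>i<N. f i))"]) auto
  qed
qed

lemma conf_comb:
  fixes K :: nat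
  assumes "\<forall>q<K. 0 < c q \<longrightarrow> conf (e q) w"
  shows "conf (\<lambda>j. \<Sum>q<K. int (c q) * e q j) w"
  unfolding conf_def
proof
  fix j
  have "0 \<le> int (c q) * e q j" if "0 \<le> w j" "q < K" for q
    using assms that unfolding conf_def by (cases "c q = 0") auto
  moreover have "int (c q) * e q j \<le> 0" if "w j \<le> 0" "q < K" for q
    using assms that unfolding conf_def by (cases "c q = 0") (auto simp: mult_nonneg_nonpos)
  ultimately show "(0 \<le> w j \<longrightarrow> 0 \<le> (\<Sum>q<K. int (c q) * e q j)) \<and> (w j \<le> 0 \<longrightarrow> (\<Sum>q<K. int (c q) * e q j) \<le> 0)"
    by (auto intro: sum_nonneg sum_nonpos)
qed

lemma comb_nz:
  fixes K :: nat
  assumes "\<forall>q<K. 0 < c q \<longrightarrow> conf (e q) w" "q0 < K" "0 < c q0" "e q0 j \<noteq> 0"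
  shows "(\<Sum>q<K. int (c q) * e q j) \<noteq> 0"
proof (cases "0 < e q0 j")
  case True
  then have "0 < w j" using assms unfolding conf_def by (meson not_le)
  then have nn: "\<forall>q\<in>{..<K}. 0 \<le> int (c q) * e q j"
    using assms(1) unfolding conf_def by (metis lessThan_iff less_le mult_eq_0_iff of_nat_0_le_iff zero_le_mult_iff not_gr_zero of_nat_0)
  have "int (c q0) * e q0 j \<le> (\<Sum>q<K. int (c q) * e q j)"
    using member_le_sum[of q0 "{..<K}" "\<lambda>q. int (c q) * e q j"] nn assms(2) by simp
  moreover have "0 < int (c q0) * e q0 j" using True assms(3) by simp
  ultimately show ?thesis by simp
next
  case False
  then have neg: "e q0 j < 0" using assms(4) by simp
  then have "w j < 0" using assms unfolding conf_def by (meson not_le)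
  then have nn: "\<forall>q\<in>{..<K}. 0 \<le> - (int (c q) * e q j)"
    using assms(1) unfolding conf_def
    by (metis lessThan_iff less_le mult_eq_0_iff of_nat_0_le_iff mult_nonneg_nonpos neg_0_le_iff_le not_gr_zero of_nat_0)
  have "- (int (c q0) * e q0 j) \<le> (\<Sum>q<K. - (int (c q) * e q j))"
    using member_le_sum[of q0 "{..<K}" "\<lambda>q. - (int (c q) * e q j)"] nn assms(2) by simp
  moreover have "0 < - (int (c q0) * e q0 j)" using neg assms(3) by (simp add: mult_pos_neg)
  ultimately show ?thesis by (simp add: sum_negf)
qed

lemma Bsum:
  fixes N n K :: nat
  shows "(\<Sum>i<N. \<Sum>j<n. B r j * (\<Sum>q<K. int (\<mu> i q) * e q j)) =
   (\<Sum>q<K. int (\<Sum>i<N. \<mu> i q) * (\<Sum>j<n. B r j * (e q j :: int)))"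
proof -
  have "(\<Sum>i<N. \<Sum>j<n. B r j * (\<Sum>q<K. int (\<mu> i q) * e q j)) =
        (\<Sum>i<N. \<Sum>q<K. int (\<mu> i q) * (\<Sum>j<n. B r j * e q j))"
    by (simp add: sum_distrib_left sum_distrib_right sum.swap[of _ "{..<n}"] algebra_simps)
  also have "\<dots> = (\<Sum>q<K. \<Sum>i<N. int (\<mu> i q) * (\<Sum>j<n. B r j * e q j))"
    by (rule sum.swap)
  also have "\<dots> = (\<Sum>q<K. int (\<Sum>i<N. \<mu> i q) * (\<Sum>j<n. B r j * e q j))"
    by (simp add: sum_distrib_right)
  finally show ?thesis .
qed

lemma unbrk_cong: "(\<forall>i<N. b1 i = b2 i) \<Longrightarrow> unbrk s n N b1 = unbrk s n N b2"
proof
  fix c assume H: "\<forall>i<N. b1 i = b2 i"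
  show "unbrk s n N b1 c = unbrk s n N b2 c"
  proof (cases "c < N*n+N*s")
    case True
    then obtain i j where "i < N" "\<forall>b. unbrk s n N b c = b i j" using unbrk_idx by blast
    then show ?thesis using H by simp
  next
    case False then show ?thesis by (simp add: unbrk_supp)
  qed
qed

lemma unbrk_zero: "(\<forall>i<N. b i = (\<lambda>_. 0)) \<Longrightarrow> unbrk s n N b = (\<lambda>_. 0)"
proof -
  assume "\<forall>i<N. b i = (\<lambda>_. 0)"
  then have "unbrk s n N b = unbrk s n N (\<lambda>_ _. 0)" by (intro unbrk_cong) simp
  also have "\<dots> = (\<lambda>_. 0)" by (auto simp: unbrk_def)
  finally show ?thesis .
qed




context
  fixes da db s n :: nat and A B C :: "nat \<Rightarrow> nat \<Rightarrow> int" and es :: "(nat \<Rightarrow> int) list"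
  assumes es: "set es = {w. prim (Klow da s n A C) w}"
begin

definition Zs :: "(nat \<Rightarrow> nat) set" where
  "Zs = {\<nu>. (\<forall>q. length es \<le> q \<longrightarrow> \<nu> q = 0) \<and> (\<exists>q. \<nu> q \<noteq> 0) \<and>
     (\<forall>r<db. (\<Sum>q<length es. int (\<nu> q) * (\<Sum>j<n. B r j * (es!q) j)) = 0)}"

definition Mins :: "(nat \<Rightarrow> nat) set" where
  "Mins = {\<nu>\<in>Zs. \<forall>\<nu>'\<in>Zs. (\<forall>q. \<nu>' q \<le> \<nu> q) \<longrightarrow> \<nu>' = \<nu>}"

definition gg :: nat where "gg = (\<Sum>\<nu>\<in>Mins. \<Sum>q<length es. \<nu> q)"

lemma prim_e: "prim (Klow da s n A C) w \<longleftrightarrow> (\<exists>q<length es. w = es!q)"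
  using es by (metis in_set_conv_nth mem_Collect_eq)

lemma e_Klow: "q < length es \<Longrightarrow> es!q \<in> Klow da s n A C"
  using prim_e by (auto simp: prim_def)

lemma e_nz: "q < length es \<Longrightarrow> es!q \<noteq> (\<lambda>_. 0)"
  using prim_e by (auto simp: prim_def)

lemma Mins_finite: "finite Mins"
proof (rule antichain_finite[of _ "length es"])
  show "\<forall>v\<in>Mins. \<forall>l\<ge>length es. v l = 0" by (auto simp: Mins_def Zs_def)
  show "\<forall>v\<in>Mins. \<forall>w\<in>Mins. (\<forall>l<length es. v l \<le> w l) \<longrightarrow> v = w"
  proof (intro ballI impI)
    fix v w assume v: "v \<in> Mins" and w: "w \<in> Mins" and le: "\<forall>l<length es. v l \<le> w l"
    have "\<forall>q. v q \<le> w q" using le v by (auto simp: Mins_def Zs_def) (metis le0 not_le)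
    then show "v = w" using v w unfolding Mins_def by blast
  qed
qed

lemma decomp_low:
  assumes "w \<in> Klow da s n A C"
  shows "\<exists>m::nat\<Rightarrow>nat. w = (\<lambda>j. \<Sum>q<length es. int (m q) * (es!q) j) \<and>
          (\<forall>q<length es. 0 < m q \<longrightarrow> conf (es!q) w)"
  using zlat.decomp[OF Klow_zlat, where Kn="length es" and e="\<lambda>q. es!q", OF prim_e assms] .

lemma main_claim:
  assumes zg: "z \<in> graver_basis (block_rows da db s N) (block_cols n s N) (block_matrix da db s n A B C N)"
  shows "\<exists>\<mu>::nat\<Rightarrow>nat\<Rightarrow>nat. (\<forall>i q. (N \<le> i \<or> length es \<le> q) \<longrightarrow> \<mu> i q = 0) \<and>
      (\<Sum>i<N. \<Sum>q<length es. \<mu> i q) \<le> gg \<and>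
      z = unbrk s n N (\<lambda>i j. \<Sum>q<length es. int (\<mu> i q) * (es!q) j)"
proof -
  let ?K = "kerS (block_rows da db s N) (block_cols n s N) (block_matrix da db s n A B C N)"
  let ?Kn = "length es"
  let ?e = "\<lambda>q. es!q"
  have P: "prim ?K z" using graver_prim[OF zg] .
  have zK: "z \<in> ?K" and znz: "z \<noteq> (\<lambda>_. 0)"
    and H: "\<forall>u\<in>?K. \<forall>v\<in>?K. z = (\<lambda>i. u i + v i) \<longrightarrow> conf u z \<longrightarrow> conf v z \<longrightarrow> u = (\<lambda>_. 0) \<or> v = (\<lambda>_. 0)"
    using P unfolding prim_def by blast+
  have zsupp: "\<forall>c. N*n+N*s \<le> c \<longrightarrow> z c = 0" and zbr: "\<forall>i<N. brk s n N z i \<in> Klow da s n A C"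
    and zB: "\<forall>r<db. (\<Sum>i<N. \<Sum>j<n. B r j * brk s n N z i j) = 0"
    using zK unfolding ker_char by blast+
  have zub: "z = unbrk s n N (brk s n N z)" using unbrk_brk[OF zsupp] by simp
  have "\<forall>i. \<exists>m. i < N \<longrightarrow> brk s n N z i = (\<lambda>j. \<Sum>q<?Kn. int (m q) * ?e q j) \<and>
          (\<forall>q<?Kn. 0 < m q \<longrightarrow> conf (?e q) (brk s n N z i))"
    using decomp_low zbr by blast
  from choice[OF this] obtain \<mu>0 where \<mu>0: "\<forall>i<N. brk s n N z i = (\<lambda>j. \<Sum>q<?Kn. int (\<mu>0 i q) * ?e q j) \<and>
          (\<forall>q<?Kn. 0 < \<mu>0 i q \<longrightarrow> conf (?e q) (brk s n N z i))"
    by blast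
  define \<mu> where "\<mu> = (\<lambda>i q. if i < N \<and> q < ?Kn then \<mu>0 i q else 0)"
  have \<mu>supp: "\<forall>i q. (N \<le> i \<or> ?Kn \<le> q) \<longrightarrow> \<mu> i q = 0" by (auto simp: \<mu>_def)
  have bz: "\<forall>i<N. brk s n N z i = (\<lambda>j. \<Sum>q<?Kn. int (\<mu> i q) * ?e q j)"
  proof (intro allI impI)
    fix i assume "i < N"
    then have "brk s n N z i = (\<lambda>j. \<Sum>q<?Kn. int (\<mu>0 i q) * ?e q j)" using \<mu>0 by blast
    also have "\<dots> = (\<lambda>j. \<Sum>q<?Kn. int (\<mu> i q) * ?e q j)"
      using \<open>i < N\<close> by (auto simp: \<mu>_def intro!: sum.cong)
    finally show "brk s n N z i = (\<lambda>j. \<Sum>q<?Kn. int (\<mu> i q) * ?e q j)" .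
  qed
  have cz: "\<forall>i<N. \<forall>q<?Kn. 0 < \<mu> i q \<longrightarrow> conf (?e q) (brk s n N z i)"
    using \<mu>0 by (auto simp: \<mu>_def)
  define \<nu> where "\<nu> = (\<lambda>q. \<Sum>i<N. \<mu> i q)"
  have \<nu>supp: "\<forall>q. ?Kn \<le> q \<longrightarrow> \<nu> q = 0" using \<mu>supp by (simp add: \<nu>_def)
  have Bz: "(\<Sum>q<?Kn. int (\<nu> q) * (\<Sum>j<n. B r j * ?e q j)) = 0" if "r < db" for r
    using zB that bz Bsum[where N=N and n=n and B=B and r=r and K="?Kn" and \<mu>=\<mu> and e="?e"] by (simp add: \<nu>_def)
  have \<nu>nz: "\<exists>q. \<nu> q \<noteq> 0"
  proof (rule ccontr)
    assume "\<not> ?thesis"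
    then have "\<forall>i<N. \<forall>q. \<mu> i q = 0" by (simp add: \<nu>_def)
    then have "\<forall>i<N. brk s n N z i = (\<lambda>_. 0)" using bz by simp
    then have "unbrk s n N (brk s n N z) = (\<lambda>_. 0)" by (rule unbrk_zero)
    then have "z = (\<lambda>_. 0)" using trans[OF zub] by blast
    then show False using znz by simp
  qed
  have \<nu>Z: "\<nu> \<in> Zs" unfolding Zs_def using \<nu>supp \<nu>nz Bz by blast
  have \<nu>M: "\<nu> \<in> Mins"
    unfolding Mins_def
  proof (intro CollectI conjI ballI impI \<nu>Z)
    fix \<nu>' assume \<nu>'Z: "\<nu>' \<in> Zs" and le: "\<forall>q. \<nu>' q \<le> \<nu> q"
    show "\<nu>' = \<nu>"
    proof (rule ccontr)
      assume neq: "\<nu>' \<noteq> \<nu>"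
      have "\<forall>q. \<exists>f'. (\<forall>i. f' i \<le> \<mu> i q) \<and> (\<Sum>i<N. f' i) = \<nu>' q"
        using split_nat_sum le unfolding \<nu>_def by blast
      from choice[OF this] obtain \<mu>1 where \<mu>1: "\<forall>q. (\<forall>i. \<mu>1 q i \<le> \<mu> i q) \<and> (\<Sum>i<N. \<mu>1 q i) = \<nu>' q" by blast
      define \<mu>' where "\<mu>' = (\<lambda>i q. if i < N \<and> q < ?Kn then \<mu>1 q i else 0)"
      have \<mu>'le: "\<forall>i q. \<mu>' i q \<le> \<mu> i q" using \<mu>1 by (simp add: \<mu>'_def)
      have \<nu>'supp: "\<forall>q. ?Kn \<le> q \<longrightarrow> \<nu>' q = 0" using \<nu>'Z by (simp add: Zs_def)
      have \<mu>'sum: "(\<Sum>i<N. \<mu>' i q) = \<nu>' q" for q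
      proof (cases "q < ?Kn")
        case True
        then have "(\<Sum>i<N. \<mu>' i q) = (\<Sum>i<N. \<mu>1 q i)" by (auto simp: \<mu>'_def intro!: sum.cong)
        then show ?thesis using \<mu>1 by simp
      next
        case False then show ?thesis using \<nu>'supp by (simp add: \<mu>'_def)
      qed
      have \<mu>''sum: "(\<Sum>i<N. \<mu> i q - \<mu>' i q) = \<nu> q - \<nu>' q" for q
        using \<mu>'sum \<mu>'le by (simp add: \<nu>_def sum_subtractf_nat)
      define ub where "ub = (\<lambda>i j. \<Sum>q<?Kn. int (\<mu>' i q) * ?e q j)"
      define vb where "vb = (\<lambda>i j. \<Sum>q<?Kn. int (\<mu> i q - \<mu>' i q) * ?e q j)"
      define u where "u = unbrk s n N ub"
      define v where "v = unbrk s n N vb"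
      have ubK: "ub i \<in> Klow da s n A C" for i
        unfolding ub_def by (rule Klow_comb) (simp add: e_Klow)
      have vbK: "vb i \<in> Klow da s n A C" for i
        unfolding vb_def by (rule Klow_comb) (simp add: e_Klow)
      have uB: "(\<Sum>i<N. \<Sum>j<n. B r j * ub i j) = 0" if "r < db" for r
        using \<nu>'Z that Bsum[where N=N and n=n and B=B and r=r and K="?Kn" and \<mu>=\<mu>' and e="?e"] \<mu>'sum by (simp add: ub_def Zs_def)
      have vB: "(\<Sum>i<N. \<Sum>j<n. B r j * vb i j) = 0" if "r < db" for r
      proof -
        have "(\<Sum>i<N. \<Sum>j<n. B r j * vb i j) =
            (\<Sum>q<?Kn. int (\<nu> q - \<nu>' q) * (\<Sum>j<n. B r j * ?e q j))"
          using Bsum[where N=N and n=n and B=B and r=r and K="?Kn" and \<mu>="\<lambda>i q. \<mu> i q - \<mu>' i q" and e="?e"] \<mu>''sum by (simp add: vb_def)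
        also have "\<dots> = (\<Sum>q<?Kn. int (\<nu> q) * (\<Sum>j<n. B r j * ?e q j)) -
                         (\<Sum>q<?Kn. int (\<nu>' q) * (\<Sum>j<n. B r j * ?e q j))"
          using le by (simp add: of_nat_diff left_diff_distrib sum_subtractf)
        also have "\<dots> = 0" using Bz[OF that] \<nu>'Z that by (simp add: Zs_def)
        finally show ?thesis .
      qed
      have uK: "u \<in> ?K" unfolding u_def using unbrk_ker ubK uB by blast
      have vK: "v \<in> ?K" unfolding v_def using unbrk_ker vbK vB by blast
      have brksum: "\<forall>i<N. brk s n N z i = (\<lambda>j. ub i j + vb i j)"
      proof (intro allI impI ext)
        fix i j assume "i < N"
        have "brk s n N z i j = (\<Sum>q<?Kn. int (\<mu> i q) * ?e q j)" using bz \<open>i < N\<close> by simp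
        also have "\<dots> = (\<Sum>q<?Kn. int (\<mu>' i q) * ?e q j + int (\<mu> i q - \<mu>' i q) * ?e q j)"
          using \<mu>'le by (intro sum.cong) (auto simp: of_nat_diff algebra_simps)
        also have "\<dots> = ub i j + vb i j" by (simp add: ub_def vb_def sum.distrib)
        finally show "brk s n N z i j = ub i j + vb i j" .
      qed
      have zuv: "z = (\<lambda>c. u c + v c)"
      proof -
        have "z = unbrk s n N (\<lambda>i j. ub i j + vb i j)" using zub unbrk_cong[OF brksum] by (rule trans)
        then show ?thesis unfolding u_def v_def by (simp add: fun_eq_iff unbrk_add)
      qed
      have cu: "conf u z"
      proof -
        have "\<forall>i<N. conf (ub i) (brk s n N z i)"
        proof (intro allI impI)
          fix i assume "i < N"
          have "\<forall>q<?Kn. 0 < \<mu>' i q \<longrightarrow> conf (?e q) (brk s n N z i)"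
            using cz \<open>i < N\<close> \<mu>'le by (metis (no_types, lifting) gr0I le_zero_eq)
          then show "conf (ub i) (brk s n N z i)" unfolding ub_def by (rule conf_comb)
        qed
        then have "conf (unbrk s n N ub) (unbrk s n N (brk s n N z))" by (rule unbrk_conf)
        then show ?thesis unfolding u_def using zub[symmetric] by simp
      qed
      have cv: "conf v z"
      proof -
        have "\<forall>i<N. conf (vb i) (brk s n N z i)"
        proof (intro allI impI)
          fix i assume "i < N"
          have "\<forall>q<?Kn. 0 < \<mu> i q - \<mu>' i q \<longrightarrow> conf (?e q) (brk s n N z i)"
            using cz \<open>i < N\<close> by simp
          then show "conf (vb i) (brk s n N z i)" unfolding vb_def by (rule conf_comb)
        qed
        then have "conf (unbrk s n N vb) (unbrk s n N (brk s n N z))" by (rule unbrk_conf)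
        then show ?thesis unfolding v_def using zub[symmetric] by simp
      qed
      have bu: "\<forall>i<N. brk s n N u i = ub i" unfolding u_def
        using brk_unbrk ubK by (simp add: Klow_def)
      have bv: "\<forall>i<N. brk s n N v i = vb i" unfolding v_def
        using brk_unbrk vbK by (simp add: Klow_def)
      have brk0: "brk s n N (\<lambda>_. 0) i j = 0" for i j by (simp add: brk_def)
      have unz: "u \<noteq> (\<lambda>_. 0)"
      proof -
        obtain q where q: "\<nu>' q \<noteq> 0" using \<nu>'Z by (auto simp: Zs_def)
        then have qK: "q < ?Kn" using \<nu>'supp by (cases "q < ?Kn") auto
        have "\<exists>i<N. 0 < \<mu>' i q"
        proof (rule ccontr)
          assume "\<not> ?thesis"
          then have "(\<Sum>i<N. \<mu>' i q) = 0" by simp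
          then show False using q \<mu>'sum[of q] by simp
        qed
        then obtain i where i: "i < N" "0 < \<mu>' i q" by blast
        obtain j where j: "?e q j \<noteq> 0" using e_nz[OF qK] by auto
        have "\<forall>q<?Kn. 0 < \<mu>' i q \<longrightarrow> conf (?e q) (brk s n N z i)"
          using cz i(1) \<mu>'le by (metis (no_types, lifting) gr0I le_zero_eq)
        then have "ub i j \<noteq> 0" unfolding ub_def
          using qK i(2) j by (rule comb_nz[where e="\<lambda>q. es!q" and c="\<lambda>q. \<mu>' i q"])
        then have "brk s n N u i j \<noteq> 0" using bu i(1) by simp
        then show ?thesis using brk0 by auto
      qed
      have vnz: "v \<noteq> (\<lambda>_. 0)"
      proof -
        obtain q where q: "\<nu>' q \<noteq> \<nu> q" using neq by auto
        have "\<nu>' q \<le> \<nu> q" using le by blast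
        then have q': "\<nu> q - \<nu>' q \<noteq> 0" using q by linarith
        then have qK: "q < ?Kn" using \<nu>supp by (cases "q < ?Kn") auto
        have "\<exists>i<N. 0 < \<mu> i q - \<mu>' i q"
        proof (rule ccontr)
          assume nex: "\<not> ?thesis"
          have "(\<Sum>i<N. \<mu> i q - \<mu>' i q) = 0"
          proof (intro sum.neutral ballI)
            fix a assume "a \<in> {..<N}"
            then show "\<mu> a q - \<mu>' a q = 0" using nex by auto
          qed
          then show False using q' \<mu>''sum[of q] by simp
        qed
        then obtain i where i: "i < N" "0 < \<mu> i q - \<mu>' i q" by blast
        obtain j where j: "?e q j \<noteq> 0" using e_nz[OF qK] by auto
        have "\<forall>q<?Kn. 0 < \<mu> i q - \<mu>' i q \<longrightarrow> conf (?e q) (brk s n N z i)"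
          using cz i(1) by simp
        then have "vb i j \<noteq> 0" unfolding vb_def
          using qK i(2) j by (rule comb_nz[where e="\<lambda>q. es!q" and c="\<lambda>q. \<mu> i q - \<mu>' i q"])
        then have "brk s n N v i j \<noteq> 0" using bv i(1) by simp
        then show ?thesis using brk0 by auto
      qed
      show False using H[rule_format, OF uK vK zuv cu cv] unz vnz by blast
    qed
  qed
  have "(\<Sum>q<?Kn. \<nu> q) \<le> gg"
    unfolding gg_def using member_le_sum[OF \<nu>M, of "\<lambda>\<nu>. \<Sum>q<?Kn. \<nu> q"] Mins_finite by simp
  moreover have "(\<Sum>i<N. \<Sum>q<?Kn. \<mu> i q) = (\<Sum>q<?Kn. \<nu> q)"
    unfolding \<nu>_def by (rule sum.swap)
  moreover have zfin: "z = unbrk s n N (\<lambda>i j. \<Sum>q<?Kn. int (\<mu> i q) * ?e q j)"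
    using zub unbrk_cong[OF bz] by (rule trans)
  ultimately have "(\<Sum>i<N. \<Sum>q<?Kn. \<mu> i q) \<le> gg" by simp
  then show ?thesis using \<mu>supp zfin by (intro exI[of _ \<mu>] conjI) blast+
qed

end



lemma list_of_counts:
  fixes f :: "'a \<Rightarrow> nat"
  shows "finite D \<Longrightarrow> \<exists>xs. set xs \<subseteq> D \<and> (\<forall>p\<in>D. count_list xs p = f p) \<and> length xs = sum f D"
proof (induction D rule: finite_induct)
  case empty then show ?case by simp
next
  case (insert x F)
  then obtain xs where xs: "set xs \<subseteq> F" "\<forall>p\<in>F. count_list xs p = f p" "length xs = sum f F" by blast
  have "x \<notin> set xs" using xs(1) insert(2) by blast
  moreover have "count_list (replicate m x) p = (if p = x then m else 0)" for m p
    by (induction m) auto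
  ultimately show ?case using xs insert
    by (intro exI[of _ "replicate (f x) x @ xs"]) auto
qed

lemma bitlen_le: "bitlen m \<le> m"
proof (induction m rule: bitlen.induct)
  case (1 m)
  show ?case
  proof (cases "m = 0")
    case True then show ?thesis by (subst bitlen.simps) simp
  next
    case False
    then have "bitlen m = Suc (bitlen (m div 2))" by (subst bitlen.simps) simp
    also have "\<dots> \<le> Suc (m div 2)" using 1 False by (simp del: bitlen.simps)
    also have "\<dots> \<le> m" using False by linarith
    finally show ?thesis .
  qed
qed

lemma enc_int_le: "enc_int x \<le> 1 + nat \<bar>x\<bar>"
  unfolding enc_int_def using bitlen_le[of "nat \<bar>x\<bar>"] by (simp del: bitlen.simps)

lemma geom_bound:
  fixes a b g :: nat
  assumes "a \<le> b" "1 \<le> b"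
  shows "(\<Sum>m\<le>g. a^m) \<le> (g+1) * b^g"
proof -
  have "(\<Sum>m\<le>g. a^m) \<le> (\<Sum>m\<le>g. b^g)"
  proof (rule sum_mono)
    fix m assume "m \<in> {..g}"
    then have "m \<le> g" by simp
    then have "a^m \<le> b^m" "b^m \<le> b^g"
      using power_mono[OF assms(1), of m] power_increasing[OF _ assms(2)] by auto
    then show "a^m \<le> b^g" by simp
  qed
  then show ?thesis by simp
qed

theorem lemma2:
  fixes A B C :: "nat \<Rightarrow> nat \<Rightarrow> int" and da db s n :: nat
  shows "\<exists>c k :: nat. \<forall>N\<ge>1.
     finite (graver_basis (block_rows da db s N) (block_cols n s N) (block_matrix da db s n A B C N))
   \<and> enc_set (block_cols n s N)
       (graver_basis (block_rows da db s N) (block_cols n s N) (block_matrix da db s n A B C N))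
     \<le> c * N ^ k"
proof -
  have "finite {w. prim (Klow da s n A C) w}" using zlat.prim_finite[OF Klow_zlat] .
  then obtain es where es: "set es = {w. prim (Klow da s n A C) w}" using finite_list by blast
  define Kn where "Kn = length es"
  define g where "g = gg db n B es"
  define E where "E = (\<Sum>q<Kn. \<Sum>j<n+s. nat \<bar>(es!q) j\<bar>)"
  define c where "c = (g+1) * (Kn+1)^g * (n+s) * (1 + g*E)"
  have main: "finite (graver_basis (block_rows da db s N) (block_cols n s N) (block_matrix da db s n A B C N))
   \<and> enc_set (block_cols n s N)
       (graver_basis (block_rows da db s N) (block_cols n s N) (block_matrix da db s n A B C N))
     \<le> c * N ^ (g+1)" if N1: "N \<ge> 1" for N
  proof -
    let ?G = "graver_basis (block_rows da db s N) (block_cols n s N) (block_matrix da db s n A B C N)"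
    let ?D = "{..<N} \<times> {..<Kn}"
    let ?L = "{xs. set xs \<subseteq> ?D \<and> length xs \<le> g}"
    let ?k = "N*n + N*s"
    define \<Psi> where "\<Psi> = (\<lambda>xs. unbrk s n N (\<lambda>i j. \<Sum>q<Kn. int (count_list xs (i,q)) * (es!q) j))"
    have sub: "?G \<subseteq> \<Psi> ` ?L"
    proof
      fix z assume z: "z \<in> ?G"
      obtain \<mu> where \<mu>: "\<forall>i q. (N \<le> i \<or> Kn \<le> q) \<longrightarrow> \<mu> i q = 0"
          "(\<Sum>i<N. \<Sum>q<Kn. \<mu> i q) \<le> g"
          "z = unbrk s n N (\<lambda>i j. \<Sum>q<Kn. int (\<mu> i q) * (es!q) j)"
        using main_claim[OF es z] unfolding Kn_def g_def by blast
      obtain xs where xs: "set xs \<subseteq> ?D" "\<forall>p\<in>?D. count_list xs p = \<mu> (fst p) (snd p)"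
          "length xs = (\<Sum>p\<in>?D. \<mu> (fst p) (snd p))"
        using list_of_counts[of ?D "\<lambda>p. \<mu> (fst p) (snd p)"] by blast
      have "length xs = (\<Sum>i<N. \<Sum>q<Kn. \<mu> i q)"
        using xs(3) by (simp add: sum.cartesian_product case_prod_beta)
      then have xsL: "xs \<in> ?L" using xs(1) \<mu>(2) by simp
      have "\<Psi> xs = unbrk s n N (\<lambda>i j. \<Sum>q<Kn. int (\<mu> i q) * (es!q) j)"
        unfolding \<Psi>_def
      proof (rule unbrk_cong, intro allI impI ext)
        fix i j assume "i < N"
        then show "(\<Sum>q<Kn. int (count_list xs (i,q)) * (es!q) j) = (\<Sum>q<Kn. int (\<mu> i q) * (es!q) j)"
          using xs(2) by (intro sum.cong) auto
      qed
      then have "z = \<Psi> xs" using \<mu>(3) by simp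
      then show "z \<in> \<Psi> ` ?L" using xsL by blast
    qed
    have finD: "finite ?D" by simp
    have finL: "finite ?L" using finite_lists_length_le[OF finD] .
    have finG: "finite ?G" using sub finL by (meson finite_imageI finite_subset)
    have cardG: "card ?G \<le> (g+1) * (N*(Kn+1))^g"
    proof -
      have "card ?G \<le> card (\<Psi> ` ?L)" using sub finL by (intro card_mono) auto
      also have "\<dots> \<le> card ?L" using card_image_le finL by blast
      also have "\<dots> = (\<Sum>m\<le>g. card ?D ^ m)" using card_lists_length_le[OF finD] .
      also have "\<dots> = (\<Sum>m\<le>g. (N*Kn) ^ m)" by (simp add: card_cartesian_product)
      also have "\<dots> \<le> (g+1) * (N*(Kn+1))^g" using N1 by (intro geom_bound) auto
      finally show ?thesis .
    qed
    have bnd: "enc_vec ?k z \<le> ?k * (1 + g*E)" if z: "z \<in> ?G" for z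
    proof -
      obtain \<mu> where \<mu>: "\<forall>i q. (N \<le> i \<or> Kn \<le> q) \<longrightarrow> \<mu> i q = 0"
          "(\<Sum>i<N. \<Sum>q<Kn. \<mu> i q) \<le> g"
          "z = unbrk s n N (\<lambda>i j. \<Sum>q<Kn. int (\<mu> i q) * (es!q) j)"
        using main_claim[OF es z] unfolding Kn_def g_def by blast
      have entry: "nat \<bar>z c\<bar> \<le> g * E" if cl: "c < ?k" for c
      proof -
        obtain i j where ij: "i < N" "j < n+s" "\<forall>b. unbrk s n N b c = b i j"
          using unbrk_idx[OF cl] by blast
        have zc: "z c = (\<Sum>q<Kn. int (\<mu> i q) * (es!q) j)" using \<mu>(3) ij(3) by simp
        have eE: "\<bar>(es!q) j\<bar> \<le> int E" if "q < Kn" for q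
        proof -
          have "nat \<bar>(es!q) j\<bar> \<le> (\<Sum>j<n+s. nat \<bar>(es!q) j\<bar>)"
            using ij(2) by (intro member_le_sum) auto
          also have "\<dots> \<le> E" unfolding E_def
            using that by (intro member_le_sum[where f="\<lambda>q. \<Sum>j<n+s. nat \<bar>(es!q) j\<bar>"]) auto
          finally show ?thesis by linarith
        qed
        have si: "(\<Sum>q<Kn. \<mu> i q) \<le> g"
        proof -
          have "(\<Sum>q<Kn. \<mu> i q) \<le> (\<Sum>i<N. \<Sum>q<Kn. \<mu> i q)"
            using ij(1) by (intro member_le_sum[where f="\<lambda>i. \<Sum>q<Kn. \<mu> i q"]) auto
          then show ?thesis using \<mu>(2) by simp
        qed
        have "\<bar>z c\<bar> \<le> (\<Sum>q<Kn. \<bar>int (\<mu> i q) * (es!q) j\<bar>)" unfolding zc by (rule sum_abs)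
        also have "\<dots> \<le> (\<Sum>q<Kn. int (\<mu> i q) * int E)"
        proof (rule sum_mono)
          fix q assume "q \<in> {..<Kn}"
          then have "\<bar>(es!q) j\<bar> \<le> int E" using eE by simp
          then show "\<bar>int (\<mu> i q) * (es!q) j\<bar> \<le> int (\<mu> i q) * int E"
            by (simp add: abs_mult mult_left_mono)
        qed
        also have "\<dots> = int (\<Sum>q<Kn. \<mu> i q) * int E" by (simp add: sum_distrib_right)
        also have "\<dots> \<le> int g * int E" using si by (intro mult_right_mono) (simp_all only: of_nat_le_iff of_nat_0_le_iff)
        finally show ?thesis by (simp add: nat_le_iff)
      qed
      have "enc_vec ?k z = (\<Sum>c<?k. enc_int (z c))" by (simp add: enc_vec_def)
      also have "\<dots> \<le> (\<Sum>c<?k. 1 + g*E)"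
      proof (rule sum_mono)
        fix c assume "c \<in> {..<?k}"
        then show "enc_int (z c) \<le> 1 + g*E" using entry enc_int_le[of "z c"] by fastforce
      qed
      also have "\<dots> = ?k * (1 + g*E)" by simp
      finally show ?thesis .
    qed
    have "enc_set ?k ?G \<le> (\<Sum>z\<in>?G. ?k * (1 + g*E))"
      unfolding enc_set_def using bnd by (intro sum_mono) auto
    also have "\<dots> = card ?G * (?k * (1 + g*E))" by simp
    also have "\<dots> \<le> ((g+1) * (N*(Kn+1))^g) * (?k * (1 + g*E))"
      using cardG by (intro mult_right_mono) auto
    also have "\<dots> = c * N^(g+1)"
    proof -
      have pm: "(N*(Kn+1))^g = N^g * (Kn+1)^g" by (rule power_mult_distrib)
      have kk: "N*n+N*s = N*(n+s)" by (simp add: distrib_left)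
      have pa: "N^(g+1) = N^g * N" by simp
      show ?thesis unfolding c_def pm kk pa by (simp only: mult.assoc mult.commute mult.left_commute)
    qed
    finally have "enc_set ?k ?G \<le> c * N^(g+1)" .
    then show ?thesis using finG by (simp add: block_cols_def)
  qed
  then show ?thesis by blast
qed



end
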